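(* For each $K\in\mathbb{N}$ there exist an alphabet $\mathcal{A}$, a set $\mathcal{M}$ of $K$ probability measures on $\mathcal{A}^\infty$ and $\mu\in\mathcal{M}$ such that, if $w$ is the uniform prior on $\mathcal{M}$ and $\xi$ the corresponding Bayes mixture, then $\mathbb{E}_\mu C_\infty>\frac12\ln^2K-1$.
   Context: $\mathcal{A}^\infty$ carries the $\sigma$-algebra generated by cylinders $\Gamma_x=\{x\omega\}$; for a measure $\rho$, $\rho(x):=\rho(\Gamma_x)$, $\rho(y|x):=\rho(xy)/\rho(x)$. Bayes mixture: $\xi(A):=\sum_{\nu\in\mathcal{M}}w_\nu\nu(A)$ with $w_\nu=1/K$; posterior $w_\nu(x):=w_\nu\nu(x)/\xi(x)$. Logarithms are natural. For a finite string $x$, $d_x(\nu,\xi):=\sum_{a}\nu(a|x)\ln\frac{\nu(a|x)}{\xi(a|x)}$. For $\omega\in\mathcal{A}^\infty$, $c_t(\omega):=\sum_{\nu\in\mathcal{M}}w_\nu(\omega_{<t})\,d_{\omega_{<t}}(\nu,\xi)$ and $C_\infty:=\sum_{t\ge1}c_t$. *)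

theory Defs
  imports "HOL-Probability.Probability"
begin

definition seq_space :: "nat set \<Rightarrow> (nat \<Rightarrow> nat) measure" where
  "seq_space A = PiM UNIV (\<lambda>_. count_space A)"

definition cyl :: "nat set \<Rightarrow> nat list \<Rightarrow> (nat \<Rightarrow> nat) set" where
  "cyl A x = {\<omega> \<in> space (seq_space A). \<forall>i<length x. \<omega> i = x ! i}"

definition mstr :: "nat set \<Rightarrow> (nat \<Rightarrow> nat) measure \<Rightarrow> nat list \<Rightarrow> real" where
  "mstr A \<rho> x = measure \<rho> (cyl A x)"

definition mix :: "nat set \<Rightarrow> (nat \<Rightarrow> nat) measure set \<Rightarrow> nat list \<Rightarrow> real" where
  "mix A M x = (\<Sum>\<nu>\<in>M. (1 / real (card M)) * mstr A \<nu> x)"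

definition condp :: "(nat list \<Rightarrow> real) \<Rightarrow> nat list \<Rightarrow> nat \<Rightarrow> real" where
  "condp \<rho> x a = \<rho> (x @ [a]) / \<rho> x"

definition post :: "nat set \<Rightarrow> (nat \<Rightarrow> nat) measure set \<Rightarrow> (nat \<Rightarrow> nat) measure \<Rightarrow> nat list \<Rightarrow> real" where
  "post A M \<nu> x = (1 / real (card M)) * mstr A \<nu> x / mix A M x"

definition dKL :: "nat set \<Rightarrow> (nat \<Rightarrow> nat) measure set \<Rightarrow> (nat \<Rightarrow> nat) measure \<Rightarrow> nat list \<Rightarrow> real" where
  "dKL A M \<nu> x = (\<Sum>a\<in>A. condp (mstr A \<nu>) x a *
       ln (condp (mstr A \<nu>) x a / condp (mix A M) x a))"

text \<open>Prefix omega_{<t} of length t-1 = n (we index by n = t - 1).\<close>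
definition pref :: "nat \<Rightarrow> (nat \<Rightarrow> nat) \<Rightarrow> nat list" where
  "pref n \<omega> = map \<omega> [0..<n]"

text \<open>c_t(omega) with t = n + 1\<close>
definition cstep :: "nat set \<Rightarrow> (nat \<Rightarrow> nat) measure set \<Rightarrow> nat \<Rightarrow> (nat \<Rightarrow> nat) \<Rightarrow> real" where
  "cstep A M n \<omega> = (\<Sum>\<nu>\<in>M. post A M \<nu> (pref n \<omega>) * dKL A M \<nu> (pref n \<omega>))"

text \<open>C_infinity = sum_{t>=1} c_t (a series of nonnegative terms, valued in [0,\<infinity>])\<close>
definition Cinf :: "nat set \<Rightarrow> (nat \<Rightarrow> nat) measure set \<Rightarrow> (nat \<Rightarrow> nat) \<Rightarrow> ennreal" where
  "Cinf A M \<omega> = (\<Sum>n. ennreal (cstep A M n \<omega>))"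

end

theory Submission
  imports Defs
begin

lemma lnk_bound:
  fixes k :: real assumes "k \<ge> 3" shows "ln k \<le> (k-1)^2/k"
proof -
  have e: "exp (1::real) \<ge> 9/4" using exp_lower_Taylor_quadratic[of 1] by simp
  have "ln (k / exp 1) \<le> k / exp 1 - 1" using assms by (intro ln_le_minus_one) auto
  hence "ln k \<le> k / exp 1" using assms by (simp add: ln_div)
  also have "\<dots> \<le> k / (9/4)" using e assms by (intro divide_left_mono) auto
  also have "\<dots> \<le> (k-1)^2/k"
  proof -
    have "0 \<le> (k-3)*(5*k-3)" using assms by (intro mult_nonneg_nonneg) auto
    hence "4*k^2 \<le> 9*(k-1)^2" by (simp add: power2_eq_square algebra_simps)
    thus ?thesis using assms by (simp add: field_simps power2_eq_square)
  qed
  finally show ?thesis .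
qed

lemma h_bound:
  fixes k :: real assumes A0: "k = 2 \<or> k \<ge> 3"
  shows "ln k / k + (k-1)/k * ln (k/(k-1)) \<ge> ((ln k)^2 - (ln (k-1))^2) / 2"
proof -
  have assms: "k \<ge> 2" using A0 by auto
  define L where "L = ln (k/(k-1))"
  have L: "L = ln k - ln (k-1)" using assms unfolding L_def by (simp add: ln_div)
  have L1: "L \<ge> 1/k" unfolding L_def
  proof -
    have "ln (k/(k-1)) = - ln ((k-1)/k)" using assms by (simp add: ln_div)
    moreover have "ln ((k-1)/k) \<le> (k-1)/k - 1" using assms by (intro ln_le_minus_one) auto
    moreover have "(k-1)/k - 1 = - (1/k)" using assms by (simp add: field_simps)
    ultimately show "ln (k/(k-1)) \<ge> 1/k" by linarith
  qed
  have L2: "L \<le> 1/(k-1)" unfolding L_def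
  proof -
    have "ln (k/(k-1)) \<le> k/(k-1) - 1" using assms by (intro ln_le_minus_one) auto
    moreover have "k/(k-1) - 1 = 1/(k-1)" using assms by (simp add: field_simps)
    ultimately show "ln (k/(k-1)) \<le> 1/(k-1)" by linarith
  qed
  have lk: "ln k \<ge> 0" using assms by simp
  have rhs: "((ln k)^2 - (ln (k-1))^2) / 2 = L * ln k - L^2/2"
    unfolding L by (simp add: power2_eq_square field_simps)
  show ?thesis
  proof (cases "k \<ge> 3")
    case True
    have a: "ln k * (1/k - L) \<ge> ln k * (1/k - 1/(k-1))" using L2 lk by (intro mult_left_mono) auto
    have b: "ln k * (1/k - 1/(k-1)) = - (ln k / (k*(k-1)))" using assms by (simp add: field_simps)
    have c: "(k-1)/k * L \<ge> (k-1)/k * (1/k)" using L1 assms by (intro mult_left_mono) auto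
    have d: "ln k / (k*(k-1)) \<le> (k-1)/k * (1/k)"
    proof -
      have "ln k / (k*(k-1)) \<le> ((k-1)^2/k) / (k*(k-1))" using lnk_bound[OF True] assms
        by (intro divide_right_mono) auto
      also have "\<dots> = (k-1)/k * (1/k)" using assms by (simp add: field_simps power2_eq_square)
      finally show ?thesis .
    qed
    have "L^2 \<ge> 0" by simp
    have "ln k / k + (k-1)/k * L - (L * ln k - L^2/2) = ln k * (1/k - L) + (k-1)/k * L + L^2/2"
      by (simp add: algebra_simps)
    then show ?thesis using a b c d \<open>L^2 \<ge> 0\<close> rhs unfolding L_def[symmetric] by linarith
  next
    case False
    then have k2: "k = 2" using A0 by auto
    have "ln (2::real) \<le> 1" using ln_le_minus_one[of 2] by simp
    moreover have "ln (2::real) \<ge> 0" by simp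
    ultimately have "(ln (2::real))^2 \<le> ln 2" by (simp add: power2_eq_square mult_left_le)
    moreover have "ln (2::real) \<ge> 0" by simp
    ultimately show ?thesis using k2 by simp (use ln_gt_zero[of "2::real"] in linarith)
  qed
qed
lemma s_space: "(\<lambda>i. if i = j then 1 else (0::nat)) \<in> space (seq_space {0,1})"
  by (simp add: seq_space_def space_PiM PiE_iff)

lemma cyl_sets: "cyl A x \<in> sets (seq_space A)"
  unfolding cyl_def seq_space_def by measurable

lemma mstr_ret: "\<omega> \<in> space (seq_space A) \<Longrightarrow>
  mstr A (return (seq_space A) \<omega>) x = (if \<forall>i<length x. \<omega> i = x!i then 1 else 0)"
  by (simp add: mstr_def measure_return cyl_sets) (simp add: cyl_def indicator_def)

lemma sum_split3: "n < (K::nat) \<Longrightarrow> (\<Sum>j<K. (g::nat\<Rightarrow>real) j) = (\<Sum>j<n. g j) + g n + (\<Sum>j\<in>{Suc n..<K}. g j)"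
proof -
  assume "n < K"
  have "{..<K} = {..<n} \<union> {n..<K}" using \<open>n<K\<close> by auto
  hence "(\<Sum>j<K. g j) = (\<Sum>j<n. g j) + (\<Sum>j\<in>{n..<K}. g j)"
    by (simp add: sum.union_disjoint ivl_disj_int)
  also have "(\<Sum>j\<in>{n..<K}. g j) = g n + (\<Sum>j\<in>{Suc n..<K}. g j)"
    using \<open>n<K\<close> by (simp add: sum.atLeast_Suc_lessThan)
  finally show ?thesis by (simp add: add.assoc)
qed

lemma sum_split3': "n < (K::nat) \<Longrightarrow> (\<And>j. j < n \<Longrightarrow> g j = 0) \<Longrightarrow> (\<And>j. n < j \<Longrightarrow> j < K \<Longrightarrow> g j = b)
  \<Longrightarrow> g n = c \<Longrightarrow> (\<Sum>j<K. g j) = c + real (K - Suc n) * (b::real)"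
proof -
  assume a: "n < K" "\<And>j. j < n \<Longrightarrow> g j = 0" "\<And>j. n < j \<Longrightarrow> j < K \<Longrightarrow> g j = b" "g n = c"
  have "(\<Sum>j<n. g j) = 0" using a(2) by simp
  moreover have "(\<Sum>j\<in>{Suc n..<K}. g j) = (\<Sum>j\<in>{Suc n..<K}. b)" using a(3) by (intro sum.cong) auto
  ultimately show ?thesis using sum_split3[OF a(1), of g] a(4) by simp
qed
definition A2 :: "nat set" where "A2 = {0,1}"

definition sq :: "nat \<Rightarrow> nat \<Rightarrow> nat" where "sq j = (\<lambda>i. if i = j then 1 else 0)"
definition nu :: "nat \<Rightarrow> (nat\<Rightarrow>nat) measure" where "nu j = return (seq_space A2) (sq j)"
definition MM :: "nat \<Rightarrow> (nat\<Rightarrow>nat) measure set" where "MM K = nu ` {..<K}"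

lemma sq_space: "sq j \<in> space (seq_space A2)"
  unfolding sq_def A2_def by (rule s_space)

lemma mstr_nu: "mstr A2 (nu j) x = (if \<forall>i<length x. sq j i = x!i then 1 else 0)"
  unfolding nu_def by (rule mstr_ret[OF sq_space])

lemma inj_nu: "inj nu"
proof
  fix i j assume e: "nu i = nu j"
  define y where "y = map (sq i) [0..<Suc i]"
  have "mstr A2 (nu i) y = 1" unfolding mstr_nu y_def by (simp del: upt_Suc)
  hence "mstr A2 (nu j) y = 1" using e by simp
  hence "\<forall>l<length y. sq j l = y!l" unfolding mstr_nu by (metis zero_neq_one)
  hence "sq j i = y ! i" unfolding y_def by simp
  hence "sq j i = sq i i" unfolding y_def by (simp del: upt_Suc)
  thus "i = j" by (simp add: sq_def split: if_splits)
qed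

lemma card_MM: "card (MM K) = K"
  unfolding MM_def by (simp add: card_image inj_on_subset[OF inj_nu])

lemma sum_MM: "(\<Sum>m\<in>MM K. g m) = (\<Sum>j<K. g (nu j))"
  unfolding MM_def by (simp add: sum.reindex inj_on_subset[OF inj_nu])

lemma mstr_x: "mstr A2 (nu j) (replicate n 0) = (if n \<le> j then 1 else 0)"
  unfolding mstr_nu by (auto simp: sq_def)

lemma mstr_xa: "mstr A2 (nu j) (replicate n 0 @ [a]) = (if n \<le> j \<and> a = (if j = n then 1 else 0) then 1 else 0)"
proof -
  have "(\<forall>i<length (replicate n 0 @ [a]). sq j i = (replicate n 0 @ [a])!i) \<longleftrightarrow>
        (\<forall>i<n. sq j i = 0) \<and> sq j n = a"
    by (auto simp: nth_append less_Suc_eq)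
  also have "\<dots> \<longleftrightarrow> n \<le> j \<and> a = (if j = n then 1 else 0)"
    by (auto simp: sq_def)
  finally show ?thesis unfolding mstr_nu by simp
qed

lemma mix_x: "n < K \<Longrightarrow> mix A2 (MM K) (replicate n 0) = real (K - n) / real K"
proof -
  assume a: "n < K"
  have "mix A2 (MM K) (replicate n 0) = (\<Sum>j<K. 1 / real K * mstr A2 (nu j) (replicate n 0))"
    unfolding mix_def card_MM sum_MM ..
  also have "\<dots> = 1 / real K + real (K - Suc n) * (1 / real K)"
    by (rule sum_split3'[OF a]) (auto simp: mstr_x)
  also have "\<dots> = real (K - n) / real K" using a by (simp add: field_simps of_nat_diff)
  finally show ?thesis .
qed

lemma mix_x1: "n < K \<Longrightarrow> mix A2 (MM K) (replicate n 0 @ [1]) = 1 / real K"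
proof -
  assume a: "n < K"
  have "mix A2 (MM K) (replicate n 0 @ [1]) = (\<Sum>j<K. 1 / real K * mstr A2 (nu j) (replicate n 0 @ [1]))"
    unfolding mix_def card_MM sum_MM ..
  also have "\<dots> = 1 / real K + real (K - Suc n) * 0"
    by (rule sum_split3'[OF a]) (simp_all add: mstr_xa del: replicate_append_same)
  finally show ?thesis by simp
qed

lemma mix_x0: "n < K \<Longrightarrow> mix A2 (MM K) (replicate n 0 @ [0]) = real (K - Suc n) / real K"
proof -
  assume a: "n < K"
  have "mix A2 (MM K) (replicate n 0 @ [0]) = (\<Sum>j<K. 1 / real K * mstr A2 (nu j) (replicate n 0 @ [0]))"
    unfolding mix_def card_MM sum_MM ..
  also have "\<dots> = 0 + real (K - Suc n) * (1 / real K)"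
    by (rule sum_split3'[OF a]) (simp_all add: mstr_xa del: replicate_append_same)
  finally show ?thesis by simp
qed

definition hh :: "real \<Rightarrow> real" where "hh k = ln k / k + (k-1)/k * ln (k/(k-1))"

lemma pref_sq: "n < m \<Longrightarrow> pref n (sq m) = replicate n 0"
  by (simp add: pref_def sq_def list_eq_iff_nth_eq)

lemma cstep_val: "Suc n < K \<Longrightarrow> cstep A2 (MM K) n (sq (K-1)) = hh (real (K - n))"
proof -
  assume a: "Suc n < K"
  hence a': "n < K" by simp
  define k where "k = real (K - n)"
  have k2: "k \<ge> 2" using a unfolding k_def by simp
  have kK: "real (K - Suc n) = k - 1" unfolding k_def using a by (simp add: of_nat_diff)
  have K0: "real K > 0" using a by simp
  let ?x = "replicate n (0::nat)"
  have mx: "mix A2 (MM K) ?x = k / real K" using mix_x[OF a'] k_def by simp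
  have post: "post A2 (MM K) (nu j) ?x = (if n \<le> j then 1/k else 0)" for j
    unfolding post_def mx mstr_x card_MM using K0 k2 by auto
  have c1: "condp (mix A2 (MM K)) ?x 1 = 1/k"
    unfolding condp_def mx mix_x1[OF a'] using K0 k2 by (simp add: field_simps)
  have c0: "condp (mix A2 (MM K)) ?x 0 = (k-1)/k"
    unfolding condp_def mx mix_x0[OF a'] kK using K0 k2 by (simp add: field_simps)
  have sA: "sum f A2 = f 0 + f 1" for f :: "nat \<Rightarrow> real" by (simp add: A2_def)
  have cn0: "condp (mstr A2 (nu n)) ?x 0 = 0" by (simp add: condp_def mstr_x mstr_xa del: replicate_append_same)
  have cn1: "condp (mstr A2 (nu n)) ?x 1 = 1" by (simp add: condp_def mstr_x mstr_xa del: replicate_append_same)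
  have cj0: "n < j \<Longrightarrow> condp (mstr A2 (nu j)) ?x 0 = 1" for j by (simp add: condp_def mstr_x mstr_xa del: replicate_append_same)
  have cj1: "n < j \<Longrightarrow> condp (mstr A2 (nu j)) ?x 1 = 0" for j by (simp add: condp_def mstr_x mstr_xa del: replicate_append_same)
  have dn: "dKL A2 (MM K) (nu n) ?x = ln k"
    unfolding dKL_def sA cn0 cn1 c1 using k2 by (simp add: ln_div)
  have dj: "n < j \<Longrightarrow> dKL A2 (MM K) (nu j) ?x = ln (k/(k-1))" for j
    unfolding dKL_def sA using cj0[of j] cj1[of j] c0 k2 by simp
  have "cstep A2 (MM K) n (sq (K-1)) = (\<Sum>j<K. post A2 (MM K) (nu j) ?x * dKL A2 (MM K) (nu j) ?x)"
  proof -
    have "pref n (sq (K-1)) = ?x" using pref_sq[of n "K-1"] a by simp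
    thus ?thesis unfolding cstep_def sum_MM by simp
  qed
  also have "\<dots> = 1/k * ln k + real (K - Suc n) * (1/k * ln (k/(k-1)))"
    by (rule sum_split3'[OF a']) (simp_all add: post dn dj)
  also have "\<dots> = hh k" unfolding kK hh_def by (simp add: divide_inverse ac_simps)
  finally show ?thesis unfolding k_def .
qed
lemma hh_nonneg: "k \<ge> 2 \<Longrightarrow> hh k \<ge> 0"
  unfolding hh_def by (intro add_nonneg_nonneg mult_nonneg_nonneg divide_nonneg_nonneg) auto

lemma tele: "(\<Sum>i<m. hh (real (i+2))) \<ge> (ln (real (m+1)))^2/2"
proof (induction m)
  case 0 then show ?case by simp
next
  case (Suc m)
  have k: "real (m+2) = 2 \<or> real (m+2) \<ge> 3" by auto
  have "hh (real (m+2)) \<ge> ((ln (real (m+2)))^2 - (ln (real (m+2) - 1))^2)/2"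
    unfolding hh_def by (rule h_bound[OF k])
  moreover have "real (m+2) - 1 = real (m+1)" by simp
  ultimately show ?case using Suc.IH by simp
qed

lemma sum_cstep: "K \<ge> 1 \<Longrightarrow> (\<Sum>n<K-1. cstep A2 (MM K) n (sq (K-1))) \<ge> (ln (real K))^2/2"
proof -
  assume K: "K \<ge> 1"
  define g where "g i = hh (real (i+2))" for i
  have "(\<Sum>n<K-1. cstep A2 (MM K) n (sq (K-1))) = (\<Sum>n<K-1. g (K - 1 - Suc n))"
  proof (rule sum.cong)
    fix n assume "n \<in> {..<K-1}"
    hence n: "Suc n < K" by auto
    have "real (K - 1 - Suc n + 2) = real (K - n)" using n by (simp add: of_nat_diff)
    thus "cstep A2 (MM K) n (sq (K-1)) = g (K - 1 - Suc n)" unfolding g_def cstep_val[OF n] by simp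
  qed simp
  also have "\<dots> = sum g {..<K-1}" by (rule sum.nat_diff_reindex)
  also have "\<dots> \<ge> (ln (real (K-1+1)))^2/2" unfolding g_def by (rule tele)
  finally show ?thesis using K by simp
qed

lemma cstep_nonneg: "Suc n < K \<Longrightarrow> cstep A2 (MM K) n (sq (K-1)) \<ge> 0"
  unfolding cstep_val by (rule hh_nonneg) auto

theorem proposition2:
  fixes K :: nat
  assumes "K \<ge> 1"
  shows "\<exists>(A :: nat set) (M :: (nat \<Rightarrow> nat) measure set) \<mu>.
           finite A \<and> A \<noteq> {} \<and>
           finite M \<and> card M = K \<and>
           (\<forall>\<nu>\<in>M. prob_space \<nu> \<and> sets \<nu> = sets (seq_space A)) \<and>
           \<mu> \<in> M \<and>
           enn2ereal (\<integral>\<^sup>+ \<omega>. Cinf A M \<omega> \<partial>\<mu>) > ereal ((ln (real K))\<^sup>2 / 2 - 1)"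
proof (intro exI conjI)
  show "finite A2" "A2 \<noteq> {}" by (auto simp: A2_def)
  show "finite (MM K)" by (simp add: MM_def)
  show "card (MM K) = K" by (rule card_MM)
  show "\<forall>\<nu>\<in>MM K. prob_space \<nu> \<and> sets \<nu> = sets (seq_space A2)"
    by (auto simp: MM_def nu_def intro!: prob_space_return sq_space)
  show "nu (K-1) \<in> MM K" using assms by (simp add: MM_def)
  define \<omega>0 where "\<omega>0 = sq (K-1)"
  define T where "T = {\<omega> \<in> space (seq_space A2). \<forall>i. \<omega> i = \<omega>0 i}"
  have T: "T \<in> sets (seq_space A2)" unfolding T_def seq_space_def by measurable
  have w0: "\<omega>0 \<in> T" unfolding T_def \<omega>0_def using sq_space by auto
  have ST: "sets (nu (K-1)) = sets (seq_space A2)" by (simp add: nu_def)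
  have "(\<integral>\<^sup>+ \<omega>. Cinf A2 (MM K) \<omega>0 * indicator T \<omega> \<partial>nu (K-1)) \<le> (\<integral>\<^sup>+ \<omega>. Cinf A2 (MM K) \<omega> \<partial>nu (K-1))"
  proof (rule nn_integral_mono)
    fix \<omega> show "Cinf A2 (MM K) \<omega>0 * indicator T \<omega> \<le> Cinf A2 (MM K) \<omega>"
    proof (cases "\<omega> \<in> T")
      case True
      hence "\<omega> = \<omega>0" unfolding T_def by auto
      thus ?thesis using True by simp
    qed simp
  qed
  moreover have "(\<integral>\<^sup>+ \<omega>. Cinf A2 (MM K) \<omega>0 * indicator T \<omega> \<partial>nu (K-1)) = Cinf A2 (MM K) \<omega>0"
    using T w0 ST by (simp add: nn_integral_cmult_indicator nu_def emeasure_return \<omega>0_def)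
  moreover have "Cinf A2 (MM K) \<omega>0 \<ge> ennreal ((ln (real K))^2/2)"
  proof -
    have "ennreal ((ln (real K))^2/2) \<le> ennreal (\<Sum>n<K-1. cstep A2 (MM K) n \<omega>0)"
      unfolding \<omega>0_def using sum_cstep[OF assms] by (rule ennreal_leI)
    also have "\<dots> = (\<Sum>n<K-1. ennreal (cstep A2 (MM K) n \<omega>0))"
      unfolding \<omega>0_def by (rule sum_ennreal[symmetric]) (rule cstep_nonneg, auto)
    also have "\<dots> \<le> Cinf A2 (MM K) \<omega>0"
      unfolding Cinf_def by (rule sum_le_suminf) auto
    finally show ?thesis .
  qed
  ultimately have I: "ennreal ((ln (real K))^2/2) \<le> (\<integral>\<^sup>+ \<omega>. Cinf A2 (MM K) \<omega> \<partial>nu (K-1))"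
    by simp
  have "ereal ((ln (real K))^2/2 - 1) < ereal ((ln (real K))^2/2)" by simp
  also have "\<dots> = enn2ereal (ennreal ((ln (real K))^2/2))" by simp
  also have "\<dots> \<le> enn2ereal (\<integral>\<^sup>+ \<omega>. Cinf A2 (MM K) \<omega> \<partial>nu (K-1))"
    using I by (simp add: less_eq_ennreal.rep_eq)
  finally show "enn2ereal (\<integral>\<^sup>+ \<omega>. Cinf A2 (MM K) \<omega> \<partial>nu (K-1)) > ereal ((ln (real K))\<^sup>2 / 2 - 1)" .
qed

end
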